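(* For every integer $d\geq 0$, $\chi_{td}(Q_d) \leq 2^{d+1}-1$, where $Q_d$ is the $d$-dimensional hypercube graph.
   Context: $Q_d$ is the graph with vertex set $\{0,1\}^d$ in which two vertices are adjacent iff they differ in exactly one coordinate ($Q_0$ is a single vertex). For a simple graph $G$ and a positive integer $k$, a proper $k$-total difference labeling of $G$ is a function $f: V(G)\to\{1,\dots,k\}$, extended to edges by $f(\{u,v\}) = |f(u)-f(v)|$, such that: (i) adjacent vertices receive different labels; (ii) two distinct edges sharing a vertex receive different labels; (iii) no edge receives the same label as either of its endpoints. $\chi_{td}(G)$ denotes the smallest $k$ for which such a labeling exists. *)

theory Defs
  imports Main
begin

(* A simple graph is given by a vertex set V and a symmetric irreflexive
   adjacency relation adj on V. Edges are the sets {u,v} with adj u v. *)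

definition edge_label :: "('a \<Rightarrow> nat) \<Rightarrow> 'a \<Rightarrow> 'a \<Rightarrow> nat" where
  "edge_label f u v = (if f u \<le> f v then f v - f u else f u - f v)"

definition proper_total_diff_labeling ::
  "'a set \<Rightarrow> ('a \<Rightarrow> 'a \<Rightarrow> bool) \<Rightarrow> nat \<Rightarrow> ('a \<Rightarrow> nat) \<Rightarrow> bool" where
  "proper_total_diff_labeling V adj k f \<longleftrightarrow>
     (\<forall>v\<in>V. 1 \<le> f v \<and> f v \<le> k) \<and>
     (\<forall>u\<in>V. \<forall>v\<in>V. adj u v \<longrightarrow> f u \<noteq> f v) \<and>
     (\<forall>u\<in>V. \<forall>v\<in>V. \<forall>w\<in>V. adj u v \<longrightarrow> adj u w \<longrightarrow> v \<noteq> w \<longrightarrow>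
         edge_label f u v \<noteq> edge_label f u w) \<and>
     (\<forall>u\<in>V. \<forall>v\<in>V. adj u v \<longrightarrow> edge_label f u v \<noteq> f u \<and> edge_label f u v \<noteq> f v)"

definition chi_td :: "'a set \<Rightarrow> ('a \<Rightarrow> 'a \<Rightarrow> bool) \<Rightarrow> nat" where
  "chi_td V adj = (LEAST k. 0 < k \<and> (\<exists>f. proper_total_diff_labeling V adj k f))"

definition hypercube_vertices :: "nat \<Rightarrow> bool list set" where
  "hypercube_vertices d = {xs. length xs = d}"

definition hypercube_adj :: "bool list \<Rightarrow> bool list \<Rightarrow> bool" where
  "hypercube_adj xs ys \<longleftrightarrow> length xs = length ys \<and>
     card {i. i < length xs \<and> xs ! i \<noteq> ys ! i} = 1"

end

theory Submission
  imports Defs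
begin

definition bval :: "bool list \<Rightarrow> nat" where
  "bval xs = (\<Sum>i<length xs. if xs ! i then 2 ^ i else 0)"

lemma pow_sum_bound: "(\<Sum>i<n. (2::nat) ^ i) + 1 = 2 ^ n"
  by (induction n) auto

lemma bval_le: "bval xs + 1 \<le> 2 ^ length xs"
proof -
  have "bval xs \<le> (\<Sum>i<length xs. (2::nat) ^ i)"
    unfolding bval_def by (rule sum_mono) auto
  then show ?thesis using pow_sum_bound[of "length xs"] by linarith
qed

lemma adj_unique:
  assumes "hypercube_adj u v"
  shows "\<exists>i<length u. u ! i \<noteq> v ! i \<and> (\<forall>j<length u. j \<noteq> i \<longrightarrow> u ! j = v ! j)
          \<and> length v = length u"
proof -
  from assms have l: "length u = length v" and c: "card {i. i < length u \<and> u ! i \<noteq> v ! i} = 1"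
    unfolding hypercube_adj_def by auto
  then obtain i where i: "{i. i < length u \<and> u ! i \<noteq> v ! i} = {i}"
    using card_1_singletonE by blast
  then have "i < length u" "u ! i \<noteq> v ! i" by auto
  moreover have "\<forall>j<length u. j \<noteq> i \<longrightarrow> u ! j = v ! j" using i by blast
  ultimately show ?thesis using l by auto
qed

lemma bval_diff:
  assumes "length v = length u" "i < length u" "u ! i \<noteq> v ! i"
    "\<forall>j<length u. j \<noteq> i \<longrightarrow> u ! j = v ! j"
  shows "\<bar>int (bval u) - int (bval v)\<bar> = 2 ^ i"
proof -
  let ?g = "\<lambda>xs j. (if xs ! j then (2::int) ^ j else 0)"
  have "int (bval u) - int (bval v) = (\<Sum>j<length u. ?g u j - ?g v j)"
  proof -
    have h: "\<And>b x. int (if b then 2^x else 0) = (if b then 2^x else 0)" by simp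
    show ?thesis unfolding bval_def using assms(1)
    by (simp add: sum_subtractf of_nat_sum h)
  qed
  also have "\<dots> = ?g u i - ?g v i + (\<Sum>j\<in>{..<length u} - {i}. ?g u j - ?g v j)"
    using assms(2) by (subst sum.remove[of _ i]) auto
  also have "(\<Sum>j\<in>{..<length u} - {i}. ?g u j - ?g v j) = 0"
    using assms(4) by (intro sum.neutral) auto
  finally show ?thesis using assms(3) by (cases "u ! i") auto
qed

lemma edge_lab:
  assumes "hypercube_adj u v"
  shows "\<exists>i. edge_label (\<lambda>xs. 1 + 2 * bval xs) u v = 2 ^ (i+1)
     \<and> i < length u \<and> u ! i \<noteq> v ! i \<and> (\<forall>j<length u. j \<noteq> i \<longrightarrow> u ! j = v ! j) \<and> length v = length u"
proof -
  obtain i where i: "i < length u" "u ! i \<noteq> v ! i" "\<forall>j<length u. j \<noteq> i \<longrightarrow> u ! j = v ! j"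
    "length v = length u"
    using adj_unique[OF assms] by blast
  have d: "\<bar>int (bval u) - int (bval v)\<bar> = 2 ^ i" using bval_diff[OF i(4,1,2,3)] .
  have "int (edge_label (\<lambda>xs. 1 + 2 * bval xs) u v) = 2 * \<bar>int (bval u) - int (bval v)\<bar>"
    unfolding edge_label_def by auto
  then have "int (edge_label (\<lambda>xs. 1 + 2 * bval xs) u v) = int (2 ^ (i+1))"
    using d by simp
  then show ?thesis using i by (intro exI[of _ i]) (simp only: of_nat_eq_iff, simp)
qed

theorem mainTheorem9:
  fixes d :: nat
  shows "chi_td (hypercube_vertices d) hypercube_adj \<le> 2 ^ (d + 1) - 1"
proof -
  define f where "f = (\<lambda>xs. 1 + 2 * bval xs)"
  have "proper_total_diff_labeling (hypercube_vertices d) hypercube_adj (2 ^ (d + 1) - 1) f"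
    unfolding proper_total_diff_labeling_def
  proof (intro conjI ballI impI)
    fix v assume "v \<in> hypercube_vertices d"
    then have "bval v + 1 \<le> 2 ^ d" using bval_le[of v] by (simp add: hypercube_vertices_def)
    then show "1 \<le> f v" "f v \<le> 2 ^ (d + 1) - 1" unfolding f_def by auto
  next
    fix u v assume "hypercube_adj u v"
    then obtain i where "edge_label f u v = 2 ^ (i+1)" using edge_lab f_def by blast
    have "edge_label f u v \<noteq> f u"
      using \<open>edge_label f u v = 2 ^ (i+1)\<close> unfolding f_def by auto presburger
    moreover have "edge_label f u v \<noteq> f v"
      using \<open>edge_label f u v = 2 ^ (i+1)\<close> unfolding f_def by auto presburger
    ultimately show "edge_label f u v \<noteq> f u" "edge_label f u v \<noteq> f v" by auto
    show "f u \<noteq> f v"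
    proof
      assume "f u = f v"
      then have "edge_label f u v = 0" unfolding edge_label_def by simp
      then show False using \<open>edge_label f u v = 2 ^ (i+1)\<close> by simp
    qed
  next
    fix u v w assume a: "hypercube_adj u v" "hypercube_adj u w" "v \<noteq> w"
    obtain i where i: "edge_label f u v = 2 ^ (i+1)" "i < length u" "u ! i \<noteq> v ! i"
      "\<forall>j<length u. j \<noteq> i \<longrightarrow> u ! j = v ! j" "length v = length u"
      using edge_lab[OF a(1)] f_def by blast
    obtain k where k: "edge_label f u w = 2 ^ (k+1)" "k < length u" "u ! k \<noteq> w ! k"
      "\<forall>j<length u. j \<noteq> k \<longrightarrow> u ! j = w ! j" "length w = length u"
      using edge_lab[OF a(2)] f_def by blast
    show "edge_label f u v \<noteq> edge_label f u w"
    proof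
      assume "edge_label f u v = edge_label f u w"
      then have "i = k" using i(1) k(1) by simp
      have "v = w"
      proof (rule nth_equalityI)
        show "length v = length w" using i k by simp
        fix j assume "j < length v"
        then show "v ! j = w ! j" using i k \<open>i = k\<close> by (cases "j = i") auto
      qed
      then show False using a(3) by simp
    qed
  qed
  moreover have "0 < (2::nat) ^ (d + 1) - 1"
  proof -
    have "1 < (2::nat) ^ (d + 1)" by (rule one_less_power) auto
    then show ?thesis by simp
  qed
  ultimately show ?thesis unfolding chi_td_def by (intro Least_le) blast
qed

end
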